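(* Let $X$ be a Banach space, $\varphi:X\to\,]-\infty,+\infty]$ be quasiconvex, proper and lower semicontinuous, and $v^*\in X^*$. If $\varphi_{v^*}$ is not quasiconvex, then there exist $u,v,w\in X$ with $v\in\,]u,w[$ such that (i) $\varphi(w)\ge\varphi(v)>\varphi(u)$; (ii) $\varphi_{v^*}(v)>\max\{\varphi_{v^*}(u),\varphi_{v^*}(w)\}$; (iii) for every $\gamma>0$ there exists $v_\gamma\in\mathbb{B}_\gamma(v)\cap\,]v,w[$ with $\varphi_{v^*}(v)>\varphi_{v^*}(v_\gamma)$.
   Context: $]a,b[$ denotes the open segment $\{a+t(b-a):t\in\,]0,1[\}$; $\mathbb{B}_\gamma(v)$ is the open ball of radius $\gamma$ centered at $v$. For $v^*\in X^*$, $\varphi_{v^*}(x):=\varphi(x)+\langle v^*,x\rangle$. A function $f$ is quasiconvex if $f(\lambda x+(1-\lambda)y)\le\max\{f(x),f(y)\}$ for all $x,y\in X$, $\lambda\in\,]0,1[$. *)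

theory Defs
  imports "HOL-Analysis.Analysis"
begin

definition oseg :: "'a::real_vector \<Rightarrow> 'a \<Rightarrow> 'a set" where
  "oseg a b = {a + t *\<^sub>R (b - a) | t. 0 < t \<and> t < 1}"

definition quasiconvex :: "('a::real_vector \<Rightarrow> ereal) \<Rightarrow> bool" where
  "quasiconvex f \<longleftrightarrow>
     (\<forall>x y t::real. 0 < t \<and> t < 1 \<longrightarrow>
        f (t *\<^sub>R x + (1 - t) *\<^sub>R y) \<le> max (f x) (f y))"

definition proper_fun :: "('a \<Rightarrow> ereal) \<Rightarrow> bool" where
  "proper_fun f \<longleftrightarrow> (\<forall>x. f x \<noteq> -\<infinity>) \<and> (\<exists>x. f x \<noteq> \<infinity>)"

definition lsc :: "('a::topological_space \<Rightarrow> ereal) \<Rightarrow> bool" where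
  "lsc f \<longleftrightarrow> (\<forall>c. closed {x. f x \<le> c})"

definition tilt :: "('a \<Rightarrow> ereal) \<Rightarrow> ('a \<Rightarrow> real) \<Rightarrow> 'a \<Rightarrow> ereal" where
  "tilt f l x = f x + ereal (l x)"

end

theory Submission
  imports Defs
begin

lemma core:
  fixes G :: "real \<Rightarrow> real" and H :: "real \<Rightarrow> real"
  assumes mono: "\<And>s s'. s0 \<le> s \<Longrightarrow> s \<le> s' \<Longrightarrow> s' \<le> 1 \<Longrightarrow> G s \<le> G s'"
    and Hdef: "\<And>s. H s = G s + \<alpha> * s + \<beta>"
    and s01: "s0 < 1" and Hlt: "H 1 < H s0"
  shows "\<exists>v. s0 \<le> v \<and> v < 1 \<and> H v \<ge> H s0 \<and>
           (\<forall>\<delta>>0. \<exists>s. v < s \<and> s < 1 \<and> s < v + \<delta> \<and> H s < H v)"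
proof (rule ccontr)
  assume na: "\<not> ?thesis"
  have loc: "\<exists>\<delta>>0. \<forall>s. v < s \<and> s < 1 \<and> s < v + \<delta> \<longrightarrow> H s \<ge> H v"
    if "s0 \<le> v" "v < 1" "H v \<ge> H s0" for v
    using na that by (meson not_less)
  define S where "S = {t. s0 \<le> t \<and> t \<le> 1 \<and> (\<forall>s. s0 \<le> s \<and> s \<le> t \<longrightarrow> H s \<ge> H s0)}"
  have s0S: "s0 \<in> S" using s01 by (auto simp: S_def)
  have bdd: "bdd_above S" by (auto simp: S_def bdd_above_def)
  define T where "T = Sup S"
  have T1: "s0 \<le> T" using s0S bdd unfolding T_def by (meson cSup_upper)
  have T2: "T \<le> 1" unfolding T_def using s0S by (intro cSup_least) (auto simp: S_def)
  have below: "H s \<ge> H s0" if "s0 \<le> s" "s < T" for s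
  proof -
    have "\<exists>t\<in>S. s < t" using less_cSup_iff[of S s] s0S bdd that unfolding T_def by auto
    then obtain t where "t \<in> S" "s < t" by blast
    thus ?thesis using that by (auto simp: S_def)
  qed
  have HT: "H T \<ge> H s0"
  proof (cases "T = s0")
    case True thus ?thesis by simp
  next
    case False
    hence Tg: "s0 < T" using T1 by simp
    have "H T - H s0 \<ge> - e" if e: "e > 0" for e
    proof -
      define d where "d = min (e / (\<bar>\<alpha>\<bar> + 1)) ((T - s0) / 2)"
      have d0: "d > 0" using e Tg by (simp add: d_def)
      have dT: "d \<le> (T - s0)/2" unfolding d_def by (rule min.cobounded2)
      have de: "d * (\<bar>\<alpha>\<bar> + 1) \<le> e"
      proof -
        have "d \<le> e / (\<bar>\<alpha>\<bar> + 1)" unfolding d_def by (rule min.cobounded1)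
        moreover have "(0::real) < \<bar>\<alpha>\<bar> + 1" by simp
        ultimately show ?thesis by (simp add: pos_le_divide_eq)
      qed
      define s where "s = T - d"
      have ss: "s0 \<le> s" "s < T" using d0 dT by (auto simp: s_def)
      have "H s \<ge> H s0" using below ss by auto
      moreover have "G s \<le> G T" using mono ss T2 by auto
      moreover have "\<bar>\<alpha> * (T - s)\<bar> \<le> e"
      proof -
        have "\<bar>\<alpha> * (T - s)\<bar> = \<bar>\<alpha>\<bar> * d" using d0 by (simp add: s_def abs_mult)
        also have "\<dots> \<le> d * (\<bar>\<alpha>\<bar> + 1)" using d0 by (simp add: algebra_simps)
        finally show ?thesis using de by simp
      qed
      moreover have "\<alpha> * T - \<alpha> * s \<ge> - e"
        using \<open>\<bar>\<alpha> * (T - s)\<bar> \<le> e\<close> by (simp add: abs_le_iff right_diff_distrib)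
      ultimately show ?thesis unfolding Hdef by linarith
    qed
    note eps = this
    have "H T - H s0 \<ge> 0"
    proof (rule ccontr)
      assume "\<not> H T - H s0 \<ge> 0"
      hence "(H s0 - H T)/2 > 0" by simp
      from eps[OF this] \<open>\<not> H T - H s0 \<ge> 0\<close> show False by (simp add: field_simps)
    qed
    thus ?thesis by simp
  qed
  have TS: "T \<in> S"
  proof -
    have "H s \<ge> H s0" if "s0 \<le> s" "s \<le> T" for s
      using below that HT by (cases "s = T") auto
    thus ?thesis using T1 T2 by (auto simp: S_def)
  qed
  show False
  proof (cases "T = 1")
    case True
    with HT Hlt show False by simp
  next
    case False
    hence Tl: "T < 1" using T2 by simp
    obtain \<delta> where d: "\<delta> > 0" "\<forall>s. T < s \<and> s < 1 \<and> s < T + \<delta> \<longrightarrow> H s \<ge> H T"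
      using loc[OF T1 Tl HT] by blast
    define t' where "t' = T + min \<delta> (1 - T) / 2"
    have t'g: "T < t'" using d Tl by (simp add: t'_def)
    have "t' \<in> S"
    proof -
      have "H s \<ge> H s0" if "s0 \<le> s" "s \<le> t'" for s
      proof (cases "s \<le> T")
        case True thus ?thesis using TS that by (auto simp: S_def)
      next
        case False
        have st: "s \<le> T + min \<delta> (1 - T) / 2" using that(2) by (simp add: t'_def)
        have m: "min \<delta> (1 - T) \<le> \<delta>" "min \<delta> (1 - T) \<le> 1 - T" by auto
        have "T < s \<and> s < 1 \<and> s < T + \<delta>" using False m d(1) Tl st by (auto simp: min_def split: if_splits)
        hence "H s \<ge> H T" using d by blast
        thus ?thesis using HT by simp
      qed
      moreover have "t' \<le> 1" using Tl d by (auto simp: t'_def min_def field_simps)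
      ultimately show ?thesis using T1 t'g by (auto simp: S_def)
    qed
    hence "t' \<le> T" unfolding T_def using bdd by (meson cSup_upper)
    with t'g show False by simp
  qed
qed

lemma main:
  fixes \<phi> :: "'a::real_normed_vector \<Rightarrow> ereal" and l :: "'a \<Rightarrow> real"
  assumes qc: "quasiconvex \<phi>" and pr: "proper_fun \<phi>" and lin: "linear l"
    and s0: "0 < s0" "s0 < 1"
    and lt: "\<phi> a < \<phi> (a + s0 *\<^sub>R (b - a))"
    and gt: "tilt \<phi> l (a + s0 *\<^sub>R (b - a)) > max (tilt \<phi> l a) (tilt \<phi> l b)"
  shows "\<exists>u v w. v \<in> oseg u w \<and>
           \<phi> w \<ge> \<phi> v \<and> \<phi> v > \<phi> u \<and>
           tilt \<phi> l v > max (tilt \<phi> l u) (tilt \<phi> l w) \<and>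
           (\<forall>\<gamma>>0. \<exists>v\<gamma> \<in> ball v \<gamma> \<inter> oseg v w. tilt \<phi> l v > tilt \<phi> l v\<gamma>)"
proof -
  define P where "P s = a + s *\<^sub>R (b - a)" for s
  have P0: "P 0 = a" and P1: "P 1 = b" by (simp_all add: P_def)
  have notm: "\<phi> x \<noteq> -\<infinity>" for x using pr by (simp add: proper_fun_def)
  have ta: "tilt \<phi> l a \<noteq> \<infinity>" and tb: "tilt \<phi> l b \<noteq> \<infinity>" using gt by auto
  obtain pa where pa: "\<phi> a = ereal pa" using ta notm[of a]
    by (cases "\<phi> a") (auto simp: tilt_def)
  obtain pb where pb: "\<phi> b = ereal pb" using tb notm[of b]
    by (cases "\<phi> b") (auto simp: tilt_def)
  have le: "\<phi> (P s) \<le> max (\<phi> a) (\<phi> b)" if "0 \<le> s" "s \<le> 1" for s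
  proof -
    consider "s = 0" | "s = 1" | "0 < s \<and> s < 1" using \<open>0 \<le> s\<close> \<open>s \<le> 1\<close> by fastforce
    thus ?thesis
    proof cases
      case 3
      have "P s = s *\<^sub>R b + (1 - s) *\<^sub>R a" by (simp add: P_def algebra_simps)
      thus ?thesis using qc 3 unfolding quasiconvex_def by (metis max.commute)
    qed (auto simp: P0 P1)
  qed
  have fin: "\<phi> (P s) = ereal (real_of_ereal (\<phi> (P s)))" if "0 \<le> s" "s \<le> 1" for s
  proof -
    have mx: "max (\<phi> a) (\<phi> b) = ereal (max pa pb)" using pa pb by (simp add: max_def)
    have "\<phi> (P s) \<le> ereal (max pa pb)" using le[OF that] unfolding mx .
    hence "\<phi> (P s) \<noteq> \<infinity>" by (metis PInfty_neq_ereal(1) ereal_infty_less_eq(1))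
    thus ?thesis using notm by (cases "\<phi> (P s)") auto
  qed
  have aux: "\<phi> (P s) \<le> max (\<phi> (P s')) (\<phi> a)" if "0 < s" "s < s'" for s s'
  proof -
    have "P s = (s / s') *\<^sub>R P s' + (1 - s / s') *\<^sub>R a"
      using that by (simp add: P_def algebra_simps)
    thus ?thesis using qc that unfolding quasiconvex_def by auto
  qed
  have up: "\<phi> (P s0) \<le> \<phi> (P s)" if "s0 \<le> s" for s
  proof (cases "s = s0")
    case False
    hence "\<phi> (P s0) \<le> max (\<phi> (P s)) (\<phi> a)" using aux s0 that by auto
    thus ?thesis using lt unfolding P_def by (auto simp: max_def split: if_splits)
  qed simp
  have mono: "\<phi> (P s) \<le> \<phi> (P s')" if "s0 \<le> s" "s \<le> s'" for s s'
  proof (cases "s = s'")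
    case False
    hence "\<phi> (P s) \<le> max (\<phi> (P s')) (\<phi> a)" using aux s0 that by auto
    moreover have "\<phi> a < \<phi> (P s)" using up[OF that(1)] lt unfolding P_def by auto
    ultimately show ?thesis by (auto simp: max_def split: if_splits)
  qed simp
  define G where "G s = real_of_ereal (\<phi> (P s))" for s
  define H where "H s = G s + l (b - a) * s + l a" for s
  have lP: "l (P s) = l a + s * l (b - a)" for s
    using lin by (simp add: P_def linear_add linear_scale)
  have tP: "tilt \<phi> l (P s) = ereal (H s)" if s01: "0 \<le> s" "s \<le> 1" for s
  proof -
    obtain g where g: "\<phi> (P s) = ereal g" using fin[OF s01] by blast
    have "G s = g" by (simp add: G_def g)
    thus ?thesis by (simp add: tilt_def H_def g lP algebra_simps)
  qed
  have Gmono: "G s \<le> G s'" if "s0 \<le> s" "s \<le> s'" "s' \<le> 1" for s s'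
  proof -
    have "ereal (G s) \<le> ereal (G s')" unfolding G_def
      using mono[OF that(1,2)] fin[of s] fin[of s'] that s0 by auto
    thus ?thesis by simp
  qed
  have ea: "tilt \<phi> l a = ereal (H 0)" using tP[of 0] P0 by simp
  have eb: "tilt \<phi> l b = ereal (H 1)" using tP[of 1] P1 by simp
  have es: "tilt \<phi> l (a + s0 *\<^sub>R (b - a)) = ereal (H s0)"
    using tP[of s0] s0 unfolding P_def by simp
  have Hs0: "H 0 < H s0" "H 1 < H s0"
    using gt unfolding ea eb es max_less_iff_conj by simp_all
  hence Hlt: "H 1 < H s0" by simp
  obtain v where v: "s0 \<le> v" "v < 1" "H v \<ge> H s0"
    "\<forall>\<delta>>0. \<exists>s. v < s \<and> s < 1 \<and> s < v + \<delta> \<and> H s < H v"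
    using core[of s0 G H "l (b - a)" "l a", OF Gmono H_def s0(2) Hlt] by blast
  have v0: "0 < v" using v s0 by simp
  show ?thesis
  proof (intro exI conjI allI impI)
    show "P v \<in> oseg a b" using v0 v by (auto simp: oseg_def P_def)
    show "\<phi> b \<ge> \<phi> (P v)" using mono[of v 1] v P1 by simp
    show "\<phi> (P v) > \<phi> a" using up[of v] v lt unfolding P_def by auto
    show "tilt \<phi> l (P v) > max (tilt \<phi> l a) (tilt \<phi> l b)"
      unfolding ea eb tP[of v, OF less_imp_le[OF v0] less_imp_le[OF v(2)]] max_less_iff_conj
      using v(3) Hs0 by simp
  next
    fix \<gamma> :: real assume g: "\<gamma> > 0"
    define \<delta> where "\<delta> = \<gamma> / (norm (b - a) + 1)"
    have d0: "\<delta> > 0" unfolding \<delta>_def using g by (intro divide_pos_pos) (auto intro: add_nonneg_pos)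
    obtain s where s: "v < s" "s < 1" "s < v + \<delta>" "H s < H v" using v(4) d0 by blast
    show "\<exists>v\<gamma> \<in> ball (P v) \<gamma> \<inter> oseg (P v) b. tilt \<phi> l (P v) > tilt \<phi> l v\<gamma>"
    proof (intro bexI IntI)
      show "tilt \<phi> l (P v) > tilt \<phi> l (P s)"
        using tP[of v] tP[of s] s v v0 by simp
      have "dist (P v) (P s) = (s - v) * norm (b - a)"
      proof -
        have "P v - P s = (v - s) *\<^sub>R (b - a)" by (simp add: P_def algebra_simps)
        hence "dist (P v) (P s) = \<bar>v - s\<bar> * norm (b - a)" by (simp add: dist_norm)
        thus ?thesis using s by simp
      qed
      also have "\<dots> \<le> (s - v) * (norm (b - a) + 1)" using s by simp
      also have "\<dots> < \<delta> * (norm (b - a) + 1)"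
        using s norm_ge_zero[of "b - a"] by (intro mult_strict_right_mono) linarith+
      also have "\<dots> = \<gamma>"
      proof -
        have np: "norm (b - a) + 1 \<noteq> 0" using norm_ge_zero[of "b - a"] by linarith
        show ?thesis unfolding \<delta>_def using np by simp
      qed
      finally show "P s \<in> ball (P v) \<gamma>" by simp
      have "P s = P v + ((s - v) / (1 - v)) *\<^sub>R (b - P v)"
      proof -
        have bv: "b - P v = (1 - v) *\<^sub>R (b - a)" by (simp add: P_def algebra_simps)
        have cc: "((s - v) / (1 - v)) * (1 - v) = s - v" using v by simp
        have "P v + ((s - v) / (1 - v)) *\<^sub>R (b - P v) = P v + (s - v) *\<^sub>R (b - a)"
          unfolding bv scaleR_scaleR cc ..
        also have "\<dots> = P s" by (simp add: P_def algebra_simps)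
        finally show ?thesis ..
      qed
      moreover have "0 < (s - v) / (1 - v)" "(s - v) / (1 - v) < 1" using s v by auto
      ultimately show "P s \<in> oseg (P v) b" unfolding oseg_def by blast
    qed
  qed
qed

theorem lemma3p3:
  fixes \<phi> :: "'a::banach \<Rightarrow> ereal" and vs :: "'a \<Rightarrow> real"
  assumes "quasiconvex \<phi>" and "proper_fun \<phi>" and "lsc \<phi>"
    and "bounded_linear vs"
    and "\<not> quasiconvex (tilt \<phi> vs)"
  shows "\<exists>u v w. v \<in> oseg u w \<and>
           \<phi> w \<ge> \<phi> v \<and> \<phi> v > \<phi> u \<and>
           tilt \<phi> vs v > max (tilt \<phi> vs u) (tilt \<phi> vs w) \<and>
           (\<forall>\<gamma>>0. \<exists>v\<gamma> \<in> ball v \<gamma> \<inter> oseg v w. tilt \<phi> vs v > tilt \<phi> vs v\<gamma>)"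
proof -
  have lin: "linear vs" using assms(4) bounded_linear.linear by blast
  obtain x y t where t: "0 < t" "t < 1"
    and gt0: "tilt \<phi> vs (t *\<^sub>R x + (1 - t) *\<^sub>R y) > max (tilt \<phi> vs x) (tilt \<phi> vs y)"
    using assms(5) unfolding quasiconvex_def by (auto simp: not_le)
  define z where "z = t *\<^sub>R x + (1 - t) *\<^sub>R y"
  have gt: "tilt \<phi> vs z > max (tilt \<phi> vs x) (tilt \<phi> vs y)" using gt0 unfolding z_def .
  have notm: "\<phi> q \<noteq> -\<infinity>" for q using assms(2) by (simp add: proper_fun_def)
  have "\<phi> z > \<phi> x \<or> \<phi> z > \<phi> y"
  proof (rule ccontr)
    assume "\<not> ?thesis"
    hence c: "\<phi> z \<le> \<phi> x" "\<phi> z \<le> \<phi> y" by auto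
    have ta: "tilt \<phi> vs x \<noteq> \<infinity>" "tilt \<phi> vs y \<noteq> \<infinity>"
      using gt unfolding max_less_iff_conj by auto
    obtain px where px: "\<phi> x = ereal px" using ta notm[of x]
      by (cases "\<phi> x") (auto simp: tilt_def)
    obtain py where py: "\<phi> y = ereal py" using ta notm[of y]
      by (cases "\<phi> y") (auto simp: tilt_def)
    obtain pz where pz: "\<phi> z = ereal pz" using c px notm[of z]
      by (cases "\<phi> z") auto
    have h: "ereal (px + vs x) < ereal (pz + vs z)" "ereal (py + vs y) < ereal (pz + vs z)"
      using gt unfolding tilt_def px py pz max_less_iff_conj by simp_all
    have h1: "pz + vs z > px + vs x" "pz + vs z > py + vs y" using h by simp_all
    have h2: "pz \<le> px" "pz \<le> py" using c px py pz by simp_all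
    have vz: "vs z = t * vs x + (1 - t) * vs y"
      using lin unfolding z_def by (simp add: linear_add linear_scale)
    have e1: "(1 - t) * (vs y - vs x) = vs z - vs x" using vz by (simp add: algebra_simps)
    have e2: "t * (vs x - vs y) = vs z - vs y" using vz by (simp add: algebra_simps)
    have "(1 - t) * (vs y - vs x) > 0" using e1 h1 h2 by linarith
    hence "vs y - vs x > 0" using t by (simp add: zero_less_mult_iff)
    moreover have "t * (vs x - vs y) > 0" using e2 h1 h2 by linarith
    hence "vs x - vs y > 0" using t by (simp add: zero_less_mult_iff)
    ultimately show False by linarith
  qed
  thus ?thesis
  proof
    assume a: "\<phi> z > \<phi> x"
    have ez: "z = x + (1 - t) *\<^sub>R (y - x)" by (simp add: z_def algebra_simps)
    have "0 < 1 - t" "1 - t < 1" using t by simp_all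
    from main[OF assms(1,2) lin this, of x y] a gt show ?thesis unfolding ez by blast
  next
    assume a: "\<phi> z > \<phi> y"
    have ez: "z = y + t *\<^sub>R (x - y)" by (simp add: z_def algebra_simps)
    have gt': "tilt \<phi> vs z > max (tilt \<phi> vs y) (tilt \<phi> vs x)" using gt by (simp add: max.commute)
    from main[OF assms(1,2) lin t, of y x] a gt' show ?thesis unfolding ez by blast
  qed
qed

end
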